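(* Let $R$ be a $\star$-ring and $e\in P(R)$. If $a\in eRe$ is strongly $\star$-clean in the corner ring $eRe$, then $a$ is strongly $\star$-clean in $R$.
   Context: Rings are associative with identity. A $\star$-ring is a ring with a map $\star$ satisfying $(x+y)^\star=x^\star+y^\star$, $(xy)^\star=y^\star x^\star$, $(x^\star)^\star=x$. A projection is $p$ with $p^2=p=p^\star$; $P(R)$ is the set of projections, $U(R)$ the units. For $e\in P(R)$, $eRe$ is a $\star$-ring with identity $e$ and the restricted involution. An element $x$ of a $\star$-ring $S$ is strongly $\star$-clean if $x=u+p$ with $u\in U(S)$, $p\in P(S)$ and $up=pu$. *)

theory Defs
  imports Main
begin

definition star_ring :: "('a::ring_1 \<Rightarrow> 'a) \<Rightarrow> bool" where
  "star_ring st \<longleftrightarrow> (\<forall>x y. st (x + y) = st x + st y) \<and> (\<forall>x y. st (x * y) = st y * st x)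
     \<and> (\<forall>x. st (st x) = x)"

definition is_projection :: "('a::ring_1 \<Rightarrow> 'a) \<Rightarrow> 'a \<Rightarrow> bool" where
  "is_projection st p \<longleftrightarrow> p * p = p \<and> st p = p"

definition is_unit_ring :: "'a::ring_1 \<Rightarrow> bool" where
  "is_unit_ring u \<longleftrightarrow> (\<exists>v. u * v = 1 \<and> v * u = 1)"

text \<open>The corner ring eRe (as a subset of R, with identity e and restricted involution).\<close>
definition corner :: "'a::ring_1 \<Rightarrow> 'a set" where
  "corner e = {e * x * e | x. True}"

definition corner_unit :: "'a::ring_1 \<Rightarrow> 'a \<Rightarrow> bool" where
  "corner_unit e u \<longleftrightarrow> u \<in> corner e \<and> (\<exists>v\<in>corner e. u * v = e \<and> v * u = e)"

definition corner_projection :: "('a::ring_1 \<Rightarrow> 'a) \<Rightarrow> 'a \<Rightarrow> 'a \<Rightarrow> bool" where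
  "corner_projection st e p \<longleftrightarrow> p \<in> corner e \<and> is_projection st p"

definition strongly_star_clean :: "('a::ring_1 \<Rightarrow> 'a) \<Rightarrow> 'a \<Rightarrow> bool" where
  "strongly_star_clean st x \<longleftrightarrow>
     (\<exists>u p. is_unit_ring u \<and> is_projection st p \<and> u * p = p * u \<and> x = u + p)"

definition strongly_star_clean_corner :: "('a::ring_1 \<Rightarrow> 'a) \<Rightarrow> 'a \<Rightarrow> 'a \<Rightarrow> bool" where
  "strongly_star_clean_corner st e x \<longleftrightarrow>
     (\<exists>u p. corner_unit e u \<and> corner_projection st e p \<and> u * p = p * u \<and> x = u + p)"

end

theory Submission
  imports Defs
begin

lemma corner_mult:
  fixes e x :: "'a::ring_1"
  assumes "e * e = e" "x \<in> corner e"
  shows "e * x = x" "x * e = x"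
proof -
  obtain y where y: "x = e * y * e" using assms(2) unfolding corner_def by blast
  show "e * x = x" unfolding y by (metis assms(1) mult.assoc)
  show "x * e = x" unfolding y by (metis assms(1) mult.assoc)
qed

theorem proposition4p13:
  fixes st :: "'a::ring_1 \<Rightarrow> 'a" and e a :: 'a
  assumes "star_ring st"
    and "is_projection st e"
    and "a \<in> corner e"
    and "strongly_star_clean_corner st e a"
  shows "strongly_star_clean st a"
proof -
  have add: "\<And>x y. st (x + y) = st x + st y" and mul: "\<And>x y. st (x * y) = st y * st x"
    and inv: "\<And>x. st (st x) = x" using assms(1) unfolding star_ring_def by auto
  have ee: "e * e = e" and se: "st e = e" using assms(2) unfolding is_projection_def by auto
  have s1: "st 1 = 1"
  proof -
    have "st 1 = st 1 * st (st 1)" by (simp only: inv mult_1_right)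
    also have "\<dots> = st (st 1 * 1)" by (simp only: mul)
    also have "\<dots> = 1" by (simp only: mult_1_right inv)
    finally show ?thesis .
  qed
  have s0: "st 0 = 0" using add[of 0 0] by simp
  have sm: "\<And>x. st (- x) = - st x"
  proof -
    fix x
    have "st x + st (- x) = 0" using add[of x "- x"] s0 by simp
    then show "st (- x) = - st x" by (simp add: eq_neg_iff_add_eq_0 add.commute)
  qed
  have sd: "\<And>x y. st (x - y) = st x - st y"
    by (simp only: diff_conv_add_uminus add sm)
  obtain u p where u: "corner_unit e u" and p: "corner_projection st e p"
    and com: "u * p = p * u" and a: "a = u + p"
    using assms(4) unfolding strongly_star_clean_corner_def by blast
  obtain v where uc: "u \<in> corner e" and vc: "v \<in> corner e" and uv: "u * v = e" and vu: "v * u = e"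
    using u unfolding corner_unit_def by blast
  have pc: "p \<in> corner e" and pp: "p * p = p" and sp: "st p = p"
    using p unfolding corner_projection_def is_projection_def by auto
  note cu = corner_mult[OF ee uc] and cv = corner_mult[OF ee vc] and cp = corner_mult[OF ee pc]
  define f where "f = 1 - e"
  have uf: "u * f = 0" "f * u = 0" "v * f = 0" "f * v = 0" "p * f = 0" "f * p = 0" "f * f = f"
    unfolding f_def using cu cv cp ee by (simp_all add: algebra_simps)
  have "is_unit_ring (u - f)"
    unfolding is_unit_ring_def
  proof (intro exI conjI)
    show "(u - f) * (v - f) = 1" using uf uv by (simp add: algebra_simps f_def)
    show "(v - f) * (u - f) = 1" using uf vu by (simp add: algebra_simps f_def)
  qed
  moreover have "is_projection st (p + f)"
    unfolding is_projection_def
  proof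
    show "(p + f) * (p + f) = p + f" using uf pp by (simp add: algebra_simps)
    show "st (p + f) = p + f" by (simp add: add sp f_def sd s1 se)
  qed
  moreover have "(u - f) * (p + f) = (p + f) * (u - f)"
    using uf com by (simp add: algebra_simps)
  moreover have "a = (u - f) + (p + f)" using a by simp
  ultimately show ?thesis unfolding strongly_star_clean_def by blast
qed

end
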